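(* Let $t\in(1,2]$ and $n\in\mathbb{Z}^{+}$. Then: (a) $k(n,t)\geq \lfloor a(t)n\rfloor$; (b) $k(n,t)>0$ if and only if $n+1\leq t^n$; (c) $l(n,t)\geq \lfloor b(t)n\rfloor$; (d) $l(n,t)>0$ if and only if $2(n+1)\leq t^n$.
   Context: Let $f,g:(0,\infty)\to\mathbb{R}$ be $f(x)=\frac{(1+x)^{1+x}}{x^x}$ and $g(x)=\frac{2^x(1+x)^{1+x}}{x^x}$; both are strictly increasing with $\lim_{x\to0^+}f(x)=\lim_{x\to0^+}g(x)=1$. For $t\in(1,\infty)$, $a(t)$ and $b(t)$ denote the unique solutions $x>0$ of $f(x)=t$ and $g(x)=t$, respectively. For $t\in(1,2]$ and $n\in\mathbb{Z}^+$, $k(n,t)$ is the nonnegative integer with $\binom{n+k(n,t)}{n}\leq t^n<\binom{n+k(n,t)+1}{n}$, and $l(n,t)$ is the nonnegative integer with $2^{l(n,t)}\binom{n+l(n,t)}{n}\leq t^n<2^{l(n,t)+1}\binom{n+l(n,t)+1}{n}$. *)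

theory Defs
  imports "HOL-Analysis.Analysis"
begin

definition f_fun :: "real \<Rightarrow> real" where
  "f_fun x = (1 + x) powr (1 + x) / x powr x"

definition g_fun :: "real \<Rightarrow> real" where
  "g_fun x = 2 powr x * (1 + x) powr (1 + x) / x powr x"

definition a_fun :: "real \<Rightarrow> real" where
  "a_fun t = (THE x. 0 < x \<and> f_fun x = t)"

definition b_fun :: "real \<Rightarrow> real" where
  "b_fun t = (THE x. 0 < x \<and> g_fun x = t)"

definition k_fun :: "nat \<Rightarrow> real \<Rightarrow> nat" where
  "k_fun n t = (THE k. real ((n + k) choose n) \<le> t ^ n \<and> t ^ n < real ((n + k + 1) choose n))"

definition l_fun :: "nat \<Rightarrow> real \<Rightarrow> nat" where
  "l_fun n t = (THE l. 2 ^ l * real ((n + l) choose n) \<le> t ^ n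
                      \<and> t ^ n < 2 ^ (l + 1) * real ((n + l + 1) choose n))"

end

theory Submission imports Defs "HOL-Real_Asymp.Real_Asymp" begin

definition K_gen :: "(nat \<Rightarrow> nat) \<Rightarrow> real \<Rightarrow> nat" where
  "K_gen h y = (THE k. real (h k) \<le> y \<and> y < real (h (k+1)))"

lemma K_gen_props:
  assumes sm: "strict_mono h" and h0: "real (h 0) \<le> y"
  shows "real (h (K_gen h y)) \<le> y \<and> y < real (h (K_gen h y + 1))"
        "\<And>j. real (h j) \<le> y \<Longrightarrow> j \<le> K_gen h y"
        "K_gen h y > 0 \<longleftrightarrow> real (h 1) \<le> y"
proof -
  have ge: "j \<le> h j" for j
  proof (induction j)
    case (Suc j)
    have "h j < h (Suc j)" using sm by (simp add: strict_mono_def)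
    then show ?case using Suc by linarith
  qed simp
  obtain j where j: "y < real j" using reals_Archimedean2 by blast
  have "real j \<le> real (h j)" using ge[of j] by simp
  then have ex: "\<exists>j. y < real (h j)" using j by (intro exI[of _ j]) linarith
  define j0 where "j0 = (LEAST j. y < real (h j))"
  have j0: "y < real (h j0)" unfolding j0_def using ex by (rule LeastI_ex)
  have "j0 \<noteq> 0"
  proof
    assume "j0 = 0"
    then show False using j0 h0 by simp
  qed
  then obtain k where k: "j0 = Suc k" using not0_implies_Suc by blast
  have "k < j0" using k by simp
  then have "\<not> (y < real (h k))" unfolding j0_def by (rule not_less_Least)
  then have hk: "real (h k) \<le> y" by simp
  have P: "real (h k) \<le> y \<and> y < real (h (k+1))" using hk j0 k by simp
  have U: "k' = k" if "real (h k') \<le> y \<and> y < real (h (k'+1))" for k'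
  proof (rule ccontr)
    assume "k' \<noteq> k"
    then have "k' + 1 \<le> k \<or> k + 1 \<le> k'" by linarith
    then show False
    proof
      assume "k' + 1 \<le> k"
      then have "h (k'+1) \<le> h k" using sm by (simp add: strict_mono_less_eq)
      then have "real (h (k'+1)) \<le> real (h k)" by simp
      then show False using that hk by linarith
    next
      assume "k + 1 \<le> k'"
      then have "h (k+1) \<le> h k'" using sm by (simp add: strict_mono_less_eq)
      then have "real (h (k+1)) \<le> real (h k')" by simp
      then show False using that P by linarith
    qed
  qed
  have KK: "K_gen h y = k" unfolding K_gen_def using P U by (rule the_equality)
  show 1: "real (h (K_gen h y)) \<le> y \<and> y < real (h (K_gen h y + 1))" using KK P by simp
  show 2: "j \<le> K_gen h y" if "real (h j) \<le> y" for j
  proof (rule ccontr)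
    assume "\<not> j \<le> K_gen h y"
    then have "K_gen h y + 1 \<le> j" by simp
    then have "h (K_gen h y + 1) \<le> h j" using sm by (simp add: strict_mono_less_eq)
    then have "real (h (K_gen h y + 1)) \<le> real (h j)" by simp
    then show False using 1 that by linarith
  qed
  show "K_gen h y > 0 \<longleftrightarrow> real (h 1) \<le> y"
  proof
    assume "K_gen h y > 0"
    then have "h 1 \<le> h (K_gen h y)" using sm by (simp add: strict_mono_less_eq)
    then have "real (h 1) \<le> real (h (K_gen h y))" by simp
    then show "real (h 1) \<le> y" using 1 by linarith
  next
    assume "real (h 1) \<le> y"
    then show "K_gen h y > 0" using 2[of 1] by simp
  qed
qed

lemma binom_sm: assumes "0 < n" shows "strict_mono (\<lambda>k. (n + k) choose n)"
proof (rule strict_monoI_Suc)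
  fix k
  obtain n' where n: "n = Suc n'" using assms not0_implies_Suc by blast
  have e: "n + Suc k = Suc (n + k)" by simp
  have "Suc (n + k) choose Suc n' = ((n+k) choose n') + ((n+k) choose Suc n')"
    by (rule binomial_Suc_Suc)
  moreover have "(n + Suc k) choose n = Suc (n + k) choose Suc n'" using n by simp
  ultimately have "(n + Suc k) choose n = ((n+k) choose n') + ((n+k) choose n)"
    using n by simp
  moreover have "(n+k) choose n' > 0" using n by simp
  ultimately show "(n + k) choose n < (n + Suc k) choose n" by linarith
qed

lemma binom2_sm: assumes "0 < n" shows "strict_mono (\<lambda>k. 2^k * ((n + k) choose n))"
proof (rule strict_monoI_Suc)
  fix k
  have a: "(n + k) choose n < (n + Suc k) choose n"
    using strict_monoD[OF binom_sm[OF assms], of k "Suc k"] by simp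
  have "2^k * ((n + k) choose n) < 2^k * ((n + Suc k) choose n)"
    using a by (intro mult_strict_left_mono) auto
  also have "\<dots> \<le> 2^Suc k * ((n + Suc k) choose n)"
    by (intro mult_right_mono) auto
  finally show "2^k * ((n + k) choose n) < 2^Suc k * ((n + Suc k) choose n)" .
qed

lemma k_eq: "k_fun n t = K_gen (\<lambda>k. (n + k) choose n) (t^n)"
proof -
  have "\<And>k. n + k + 1 = n + (k + 1)" by simp
  then show ?thesis unfolding k_fun_def K_gen_def by simp
qed

lemma l_eq: "l_fun n t = K_gen (\<lambda>k. 2^k * ((n + k) choose n)) (t^n)"
proof -
  have "\<And>k. n + k + 1 = n + (k + 1)" by simp
  then show ?thesis unfolding l_fun_def K_gen_def by simp
qed

definition FF :: "real \<Rightarrow> real" where "FF x = (1+x)*ln(1+x) - x*ln x"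
definition GG :: "real \<Rightarrow> real" where "GG x = FF x + x * ln 2"

lemma f_exp: "0 < x \<Longrightarrow> f_fun x = exp (FF x)"
  unfolding f_fun_def FF_def powr_def by (simp add: exp_diff)

lemma g_exp: "0 < x \<Longrightarrow> g_fun x = exp (GG x)"
  unfolding g_fun_def GG_def FF_def powr_def by (simp add: exp_diff exp_add mult.commute)

lemma FF_deriv: "0 < x \<Longrightarrow> (FF has_real_derivative (ln(1+x) - ln x)) (at x)"
  unfolding FF_def[abs_def]
  by (auto intro!: derivative_eq_intros simp: field_simps)

lemma GG_deriv: "0 < x \<Longrightarrow> (GG has_real_derivative (ln(1+x) - ln x + ln 2)) (at x)"
  unfolding GG_def[abs_def]
  by (auto intro!: derivative_eq_intros FF_deriv)

lemma root_unique:
  fixes \<phi> \<phi>' :: "real \<Rightarrow> real"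
  assumes D: "\<And>x. 0 < x \<Longrightarrow> (\<phi> has_real_derivative \<phi>' x) (at x) \<and> \<phi>' x > 0"
    and L: "(\<phi> \<longlongrightarrow> 0) (at_right 0)"
    and B: "\<And>x. 0 < x \<Longrightarrow> \<phi> x \<ge> ln (1+x)"
    and c: "c > 0"
  shows "\<exists>!x. 0 < x \<and> \<phi> x = c" and "\<And>x y. 0 < x \<Longrightarrow> x < y \<Longrightarrow> \<phi> x < \<phi> y"
proof -
  show mono: "\<phi> x < \<phi> y" if xy: "0 < x" "x < y" for x y
  proof (rule DERIV_pos_imp_increasing[OF xy(2)])
    fix z assume "x \<le> z" "z \<le> y"
    then have "0 < z" using xy by linarith
    then show "\<exists>d. (\<phi> has_real_derivative d) (at z) \<and> 0 < d" using D by blast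
  qed
  have "eventually (\<lambda>x. \<phi> x < c) (at_right 0)"
    using L c by (rule order_tendstoD(2))
  then obtain b where b: "b > 0" "\<And>y. 0 < y \<Longrightarrow> y < b \<Longrightarrow> \<phi> y < c"
    unfolding eventually_at_right_field by blast
  define M where "M = exp c - 1"
  have M: "M > 0" "ln (1 + M) = c" using c by (auto simp: M_def)
  define e where "e = min (b/2) (M/2)"
  have e: "0 < e" "e < b" "e < M" using b M by (auto simp: e_def)
  have "\<phi> e < c" using b e by blast
  moreover have "c \<le> \<phi> M" using B[of M] M by simp
  moreover have "\<forall>z. e \<le> z \<and> z \<le> M \<longrightarrow> isCont \<phi> z"
  proof (intro allI impI)
    fix z assume "e \<le> z \<and> z \<le> M"
    then have "0 < z" using e by linarith
    then show "isCont \<phi> z" using D DERIV_isCont by blast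
  qed
  ultimately obtain x where x: "e \<le> x" "x \<le> M" "\<phi> x = c"
    using IVT[of \<phi> e c M] e by (meson less_imp_le)
  show "\<exists>!x. 0 < x \<and> \<phi> x = c"
  proof (rule ex1I[of _ x])
    show "0 < x \<and> \<phi> x = c" using x e by simp
    fix y assume y: "0 < y \<and> \<phi> y = c"
    show "y = x"
    proof (rule linorder_cases[of x y])
      assume "x < y" moreover have "0 < x" using x e by linarith
      ultimately have "\<phi> x < \<phi> y" using mono by blast
      then show ?thesis using x y by simp
    next
      assume "y < x" then have "\<phi> y < \<phi> x" using mono y by blast
      then show ?thesis using x y by simp
    qed simp
  qed
qed

lemma FF_lim: "(FF \<longlongrightarrow> 0) (at_right 0)"
  unfolding FF_def[abs_def] by real_asymp

lemma GG_lim: "(GG \<longlongrightarrow> 0) (at_right 0)"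
  unfolding GG_def[abs_def] FF_def by real_asymp

lemma ln_gap: "0 < x \<Longrightarrow> ln x < ln (1 + (x::real))"
  by simp

lemma FF_ge: "0 < x \<Longrightarrow> ln (1+x) \<le> FF x"
proof -
  assume x: "0 < x"
  have "FF x = ln (1+x) + x * (ln (1+x) - ln x)" unfolding FF_def by (simp add: algebra_simps)
  moreover have "0 \<le> x * (ln (1+x) - ln x)" using x ln_gap[OF x] by simp
  ultimately show ?thesis by linarith
qed

lemma GG_ge: "0 < x \<Longrightarrow> ln (1+x) \<le> GG x"
proof -
  assume x: "0 < x"
  have "0 \<le> x * ln 2" using x by simp
  then show ?thesis using FF_ge[OF x] unfolding GG_def by linarith
qed

lemma FF_D: "0 < x \<Longrightarrow> (FF has_real_derivative (ln(1+x) - ln x)) (at x) \<and> (ln(1+x) - ln x) > 0"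
  using FF_deriv ln_gap by simp

lemma GG_D: "0 < x \<Longrightarrow> (GG has_real_derivative (ln(1+x) - ln x + ln 2)) (at x) \<and> (ln(1+x) - ln x + ln 2) > 0"
proof -
  assume x: "0 < x"
  have "0 < ln (2::real)" by simp
  then have "(ln(1+x) - ln x + ln 2) > 0" using ln_gap[OF x] by linarith
  then show ?thesis using GG_deriv[OF x] by simp
qed

lemma a_props:
  assumes t: "1 < t"
  shows "0 < a_fun t" "FF (a_fun t) = ln t"
proof -
  have c: "0 < ln t" using t by simp
  have eq: "(0 < x \<and> f_fun x = t) \<longleftrightarrow> (0 < x \<and> FF x = ln t)" for x
  proof (cases "0 < x")
    case True
    then have "f_fun x = exp (FF x)" by (rule f_exp)
    moreover have "(exp (FF x) = t) \<longleftrightarrow> (FF x = ln t)" using t by auto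
    ultimately show ?thesis by simp
  qed simp
  have ex: "\<exists>!x. 0 < x \<and> FF x = ln t"
    by (rule root_unique(1)[OF FF_D FF_lim FF_ge c])
  have "a_fun t = (THE x. 0 < x \<and> FF x = ln t)" unfolding a_fun_def eq by simp
  then have "0 < a_fun t \<and> FF (a_fun t) = ln t" using theI'[OF ex] by simp
  then show "0 < a_fun t" "FF (a_fun t) = ln t" by auto
qed

lemma b_props:
  assumes t: "1 < t"
  shows "0 < b_fun t" "GG (b_fun t) = ln t"
proof -
  have c: "0 < ln t" using t by simp
  have eq: "(0 < x \<and> g_fun x = t) \<longleftrightarrow> (0 < x \<and> GG x = ln t)" for x
  proof (cases "0 < x")
    case True
    then have "g_fun x = exp (GG x)" by (rule g_exp)
    moreover have "(exp (GG x) = t) \<longleftrightarrow> (GG x = ln t)" using t by auto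
    ultimately show ?thesis by simp
  qed simp
  have ex: "\<exists>!x. 0 < x \<and> GG x = ln t"
    by (rule root_unique(1)[OF GG_D GG_lim GG_ge c])
  have "b_fun t = (THE x. 0 < x \<and> GG x = ln t)" unfolding b_fun_def eq by simp
  then have "0 < b_fun t \<and> GG (b_fun t) = ln t" using theI'[OF ex] by simp
  then show "0 < b_fun t" "GG (b_fun t) = ln t" by auto
qed

lemma FF_mono: "0 < x \<Longrightarrow> x \<le> y \<Longrightarrow> FF x \<le> FF y"
  using root_unique(2)[OF FF_D FF_lim FF_ge, of 1] by (cases "x = y") (auto simp: less_le)

lemma GG_mono: "0 < x \<Longrightarrow> x \<le> y \<Longrightarrow> GG x \<le> GG y"
  using root_unique(2)[OF GG_D GG_lim GG_ge, of 1] by (cases "x = y") (auto simp: less_le)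

lemma binom_prod_bound:
  fixes n m :: nat
  shows "real ((n + m) choose n) * real n ^ n * real m ^ m \<le> real (n + m) ^ (n + m)"
proof -
  have "real (n + m) ^ (n + m) = (real n + real m) ^ (n + m)" by simp
  also have "\<dots> = (\<Sum>k\<le>n+m. real ((n+m) choose k) * real n ^ k * real m ^ (n + m - k))"
    by (rule binomial_ring)
  also have "\<dots> \<ge> real ((n+m) choose n) * real n ^ n * real m ^ (n + m - n)"
    by (rule member_le_sum[of n "{..n+m}" "\<lambda>k. real ((n+m) choose k) * real n ^ k * real m ^ (n + m - k)"]) auto
  finally show ?thesis by simp
qed

lemma binom_ln_bound:
  fixes n m :: nat
  assumes n: "0 < n" and m: "0 < m"
  shows "ln (real ((n + m) choose n)) \<le> real n * FF (real m / real n)"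
proof -
  have pos: "0 < real ((n + m) choose n)" by simp
  have "ln (real ((n + m) choose n) * real n ^ n * real m ^ m) \<le> ln (real (n + m) ^ (n + m))"
    using binom_prod_bound[of n m] pos n m by (subst ln_le_cancel_iff) auto
  then have "ln (real ((n + m) choose n)) + real n * ln (real n) + real m * ln (real m)
      \<le> real (n + m) * ln (real (n + m))"
    using pos n m by (simp add: ln_mult ln_realpow)
  moreover have "real n * FF (real m / real n)
      = real (n + m) * ln (real (n + m)) - real n * ln (real n) - real m * ln (real m)"
  proof -
    have e1: "1 + real m / real n = real (n + m) / real n" using n by (simp add: field_simps)
    have l1: "ln (real (n + m) / real n) = ln (real (n + m)) - ln (real n)" using n by (simp add: ln_div)
    have l2: "ln (real m / real n) = ln (real m) - ln (real n)" using n m by (simp add: ln_div)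
    have "real n * FF (real m / real n)
        = real n * ((real (n + m) / real n) * (ln (real (n + m)) - ln (real n))
           - (real m / real n) * (ln (real m) - ln (real n)))"
      unfolding FF_def e1 l1 l2 by simp
    also have "\<dots> = real (n + m) * (ln (real (n + m)) - ln (real n)) - real m * (ln (real m) - ln (real n))"
      using n by (simp add: field_simps)
    also have "\<dots> = real (n + m) * ln (real (n + m)) - real n * ln (real n) - real m * ln (real m)"
      by (simp add: algebra_simps)
    finally show ?thesis .
  qed
  ultimately show ?thesis by linarith
qed

theorem lemma2p1:
  fixes t :: real and n :: nat
  assumes "1 < t" and "t \<le> 2" and "0 < n"
  shows "k_fun n t \<ge> nat \<lfloor>a_fun t * real n\<rfloor>
    \<and> (k_fun n t > 0 \<longleftrightarrow> real (n + 1) \<le> t ^ n)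
    \<and> l_fun n t \<ge> nat \<lfloor>b_fun t * real n\<rfloor>
    \<and> (l_fun n t > 0 \<longleftrightarrow> 2 * real (n + 1) \<le> t ^ n)"
proof -
  have t: "1 < t" and n: "0 < n" using assms by auto
  have tn: "1 \<le> t ^ n" using t by simp
  have tpos: "0 < t ^ n" using t by simp
  have lntn: "ln (t ^ n) = real n * ln t" using t by (simp add: ln_realpow)
  define h1 where "h1 = (\<lambda>k. (n + k) choose n)"
  define h2 where "h2 = (\<lambda>k. 2 ^ k * ((n + k) choose n))"
  have sm1: "strict_mono h1" unfolding h1_def using binom_sm[OF n] .
  have sm2: "strict_mono h2" unfolding h2_def using binom2_sm[OF n] .
  have h10: "real (h1 0) \<le> t ^ n" using tn unfolding h1_def by simp
  have h20: "real (h2 0) \<le> t ^ n" using tn unfolding h2_def by simp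
  have K1: "k_fun n t = K_gen h1 (t ^ n)" unfolding h1_def by (rule k_eq)
  have K2: "l_fun n t = K_gen h2 (t ^ n)" unfolding h2_def by (rule l_eq)
  have h11: "h1 1 = n + 1" unfolding h1_def by simp
  have h21: "real (h2 1) = 2 * real (n + 1)" unfolding h2_def by simp
  define m1 where "m1 = nat \<lfloor>a_fun t * real n\<rfloor>"
  define m2 where "m2 = nat \<lfloor>b_fun t * real n\<rfloor>"
  have A: "m1 \<le> k_fun n t"
  proof (cases "m1 = 0")
    case False
    then have m: "0 < m1" by simp
    have "real m1 \<le> a_fun t * real n" unfolding m1_def using a_props(1)[OF t] n
      by (intro of_nat_floor) simp
    then have q: "real m1 / real n \<le> a_fun t" using n by (simp add: divide_le_eq)
    have "FF (real m1 / real n) \<le> FF (a_fun t)"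
      by (rule FF_mono) (use m n q in auto)
    then have "FF (real m1 / real n) \<le> ln t" using a_props(2)[OF t] by simp
    then have "real n * FF (real m1 / real n) \<le> real n * ln t" using n by (simp add: mult_left_mono)
    then have "ln (real (h1 m1)) \<le> ln (t ^ n)"
      using binom_ln_bound[OF n m] lntn unfolding h1_def by linarith
    then have "real (h1 m1) \<le> t ^ n" using tpos unfolding h1_def by simp
    then show ?thesis unfolding K1 by (rule K_gen_props(2)[OF sm1 h10])
  qed simp
  have B: "m2 \<le> l_fun n t"
  proof (cases "m2 = 0")
    case False
    then have m: "0 < m2" by simp
    have "real m2 \<le> b_fun t * real n" unfolding m2_def using b_props(1)[OF t] n
      by (intro of_nat_floor) simp
    then have q: "real m2 / real n \<le> b_fun t" using n by (simp add: divide_le_eq)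
    have "GG (real m2 / real n) \<le> GG (b_fun t)"
      by (rule GG_mono) (use m n q in auto)
    then have "GG (real m2 / real n) \<le> ln t" using b_props(2)[OF t] by simp
    then have "real n * GG (real m2 / real n) \<le> real n * ln t" using n by (simp add: mult_left_mono)
    moreover have "real n * GG (real m2 / real n) = real n * FF (real m2 / real n) + real m2 * ln 2"
      unfolding GG_def using n by (simp add: field_simps)
    moreover have "ln (real (h2 m2)) = real m2 * ln 2 + ln (real ((n + m2) choose n))"
      unfolding h2_def by (simp add: ln_mult ln_realpow)
    ultimately have "ln (real (h2 m2)) \<le> ln (t ^ n)"
      using binom_ln_bound[OF n m] lntn by linarith
    moreover have "0 < real (h2 m2)" unfolding h2_def by simp
    ultimately have "real (h2 m2) \<le> t ^ n" using tpos by simp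
    then show ?thesis unfolding K2 by (rule K_gen_props(2)[OF sm2 h20])
  qed simp
  have C: "k_fun n t > 0 \<longleftrightarrow> real (n + 1) \<le> t ^ n"
    unfolding K1 K_gen_props(3)[OF sm1 h10] h11 ..
  have D: "l_fun n t > 0 \<longleftrightarrow> 2 * real (n + 1) \<le> t ^ n"
    unfolding K2 K_gen_props(3)[OF sm2 h20] h21 ..
  show ?thesis using A B C D unfolding m1_def m2_def by blast
qed

end
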